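(* Let $(\mathbf{x}_1,\mathbf{t}_1),(\mathbf{x}_2,\mathbf{t}_2),\dots$ be i.i.d. pairs drawn from a joint distribution $p(\mathbf{x},\mathbf{t})$ with marginals $p(\mathbf{x})$ and $p(\mathbf{t})$. Let $\mathbf{f}_x,\mathbf{f}_t$ be measurable encoders taking values in a compact set $K\subset\mathbb{R}^D$, let $d:K\times K\to\mathbb{R}$ be continuous, and fix $\tau>0$. Let $\mathcal{L}_N$ denote the multimodal contrastive loss computed on the first $N$ pairs. Then, almost surely, $$\lim_{N\to\infty}\big(\mathcal{L}_N-2\log N\big)=2\,\mathbb{E}_{(\mathbf{x},\mathbf{t})\sim p(\mathbf{x},\mathbf{t})}\big[d(\mathbf{f}_x(\mathbf{x}),\mathbf{f}_t(\mathbf{t}))/\tau\big]+\mathbb{E}_{\mathbf{x}\sim p(\mathbf{x})}\Big[\log\mathbb{E}_{\mathbf{t}\sim p(\mathbf{t})}\big[e^{-d(\mathbf{f}_x(\mathbf{x}),\mathbf{f}_t(\mathbf{t}))/\tau}\big]\Big]+\mathbb{E}_{\mathbf{t}\sim p(\mathbf{t})}\Big[\log\mathbb{E}_{\mathbf{x}\sim p(\mathbf{x})}\big[e^{-d(\mathbf{f}_x(\mathbf{x}),\mathbf{f}_t(\mathbf{t}))/\tau}\big]\Big],$$ where in the inner expectations $\mathbf{x}$ and $\mathbf{t}$ are drawn independently from their marginals.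
   Context: The multimodal contrastive loss on $N$ pairs $(\mathbf{x}_i,\mathbf{t}_i)_{i=1}^N$ with encoders $\mathbf{f}_x,\mathbf{f}_t$, "distance" $d$ and temperature $\tau>0$ is $$\mathcal{L}_N=-\frac1N\sum_{i=1}^N\log\frac{e^{-d(\mathbf{f}_x(\mathbf{x}_i),\mathbf{f}_t(\mathbf{t}_i))/\tau}}{\sum_{j=1}^N e^{-d(\mathbf{f}_x(\mathbf{x}_i),\mathbf{f}_t(\mathbf{t}_j))/\tau}}-\frac1N\sum_{i=1}^N\log\frac{e^{-d(\mathbf{f}_x(\mathbf{x}_i),\mathbf{f}_t(\mathbf{t}_i))/\tau}}{\sum_{j=1}^N e^{-d(\mathbf{f}_x(\mathbf{x}_j),\mathbf{f}_t(\mathbf{t}_i))/\tau}}.$$ *)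

theory Defs
  imports "HOL-Probability.Probability"
begin

definition contrastive_loss ::
  "('x \<Rightarrow> 'e) \<Rightarrow> ('t \<Rightarrow> 'e) \<Rightarrow> ('e \<Rightarrow> 'e \<Rightarrow> real) \<Rightarrow> real \<Rightarrow>
   (nat \<Rightarrow> 'x) \<Rightarrow> (nat \<Rightarrow> 't) \<Rightarrow> nat \<Rightarrow> real" where
  "contrastive_loss fx ft d tau xs ts N =
     - (1 / real N) * (\<Sum>i<N. ln (exp (- d (fx (xs i)) (ft (ts i)) / tau) /
              (\<Sum>j<N. exp (- d (fx (xs i)) (ft (ts j)) / tau))))
     - (1 / real N) * (\<Sum>i<N. ln (exp (- d (fx (xs i)) (ft (ts i)) / tau) /
              (\<Sum>j<N. exp (- d (fx (xs j)) (ft (ts i)) / tau))))"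

end

theory Submission imports Defs begin

lemma slln_bounded:
  fixes M :: "'a measure" and Z :: "nat \<Rightarrow> 'a \<Rightarrow> real"
  assumes M: "prob_space M"
    and indep: "prob_space.indep_vars M (\<lambda>_. borel) Z UNIV"
    and bnd: "\<And>i \<omega>. \<omega> \<in> space M \<Longrightarrow> \<bar>Z i \<omega>\<bar> \<le> B"
    and mean: "\<And>i. prob_space.expectation M (Z i) = \<mu>"
  shows "AE \<omega> in M. ((\<lambda>N. (\<Sum>i<N. Z i \<omega>) / real N) \<longlongrightarrow> \<mu>) sequentially"
proof -
  interpret prob_space M by (rule M)
  have rv[measurable]: "Z i \<in> borel_measurable M" for i
    using indep unfolding indep_vars_def by blast
  define B' where "B' = \<bar>B\<bar> + 1"
  have B'pos: "B' > 0" by (simp add: B'_def)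
  have bnd': "\<omega> \<in> space M \<Longrightarrow> Z i \<omega> \<in> {-B'..B'}" for i \<omega>
    using bnd[of \<omega> i] by (auto simp: B'_def)
  have one: "AE \<omega> in M. eventually (\<lambda>N. \<bar>(\<Sum>i<N. Z i \<omega>) / real N - \<mu>\<bar> < e) sequentially"
    if e: "e > 0" for e
  proof -
    define A where "A N = {\<omega>\<in>space M. \<bar>(\<Sum>i\<in>{..<N}. Z i \<omega>) - real N * \<mu>\<bar> \<ge> real N * e}" for N
    define c where "c = e\<^sup>2 / (2 * B'\<^sup>2)"
    have cpos: "c > 0" using e B'pos by (simp add: c_def)
    have Ameas: "A N \<in> sets M" for N unfolding A_def by measurable
    have Abound: "measure M (A N) \<le> 2 * exp (-c) ^ N" for N
    proof (cases "N = 0")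
      case True
      have "prob (A N) \<le> 1" by (rule prob_le_1)
      then show ?thesis using True by (simp del: prob_le_1; linarith)
    next
      case False
      interpret H: Hoeffding_ineq M "{..<N}" Z "\<lambda>_. -B'" "\<lambda>_. B'" "real N * \<mu>"
      proof unfold_locales
        show "indep_vars (\<lambda>_. borel) Z {..<N}"
          using indep by (rule indep_vars_subset) auto
        show "AE x in M. Z i x \<in> {- B'..B'}" for i using bnd' by auto
        show "real N * \<mu> \<equiv> \<Sum>i<N. expectation (Z i)" by (simp add: mean)
      qed auto
      have pos: "(\<Sum>i<N. (B' - - B')\<^sup>2) > 0" using False B'pos by simp
      have "measure M (A N) \<le> 2 * exp (- 2 * (real N * e)\<^sup>2 / (\<Sum>i<N. (B' - - B')\<^sup>2))"
        unfolding A_def using H.Hoeffding_ineq_abs_ge[OF _ pos, of "real N * e"] e by simp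
      also have "- 2 * (real N * e)\<^sup>2 / (\<Sum>i<N. (B' - - B')\<^sup>2) = - c * real N"
        using False B'pos by (simp add: c_def power2_eq_square field_simps)
      also have "exp (- c * real N) = exp (-c) ^ N"
        by (simp add: exp_of_nat_mult[symmetric] mult.commute)
      finally show ?thesis .
    qed
    have "summable (\<lambda>N. 2 * exp (-c) ^ N)"
      using cpos by (intro summable_mult summable_geometric) simp
    then have "summable (\<lambda>N. measure M (A N))"
      by (rule summable_comparison_test'[where N=0]) (use Abound in auto)
    then have "AE \<omega> in M. eventually (\<lambda>N. \<omega> \<in> space M - A N) sequentially"
      by (intro borel_cantelli_AE1 Ameas) (auto simp: emeasure_eq_measure)
    then show ?thesis
    proof (rule AE_mp, intro AE_I2 impI)
      fix \<omega> assume \<omega>: "\<omega> \<in> space M" and ev: "eventually (\<lambda>N. \<omega> \<in> space M - A N) sequentially"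
      show "eventually (\<lambda>N. \<bar>(\<Sum>i<N. Z i \<omega>) / real N - \<mu>\<bar> < e) sequentially"
        using ev eventually_gt_at_top[of 0]
      proof eventually_elim
        case (elim N)
        then have "\<bar>(\<Sum>i<N. Z i \<omega>) - real N * \<mu>\<bar> < real N * e" using \<omega> by (auto simp: A_def)
        also have "\<bar>(\<Sum>i<N. Z i \<omega>) - real N * \<mu>\<bar> = real N * \<bar>(\<Sum>i<N. Z i \<omega>) / real N - \<mu>\<bar>"
          using elim by (simp add: field_simps abs_mult[symmetric])
        finally show ?case using elim by simp
      qed
    qed
  qed
  have "AE \<omega> in M. \<forall>k::nat. eventually (\<lambda>N. \<bar>(\<Sum>i<N. Z i \<omega>) / real N - \<mu>\<bar> < 1 / real (Suc k)) sequentially"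
    by (subst AE_all_countable) (auto intro!: one)
  then show ?thesis
  proof (rule AE_mp, intro AE_I2 impI)
    fix \<omega> assume "\<omega> \<in> space M" and H: "\<forall>k::nat. eventually (\<lambda>N. \<bar>(\<Sum>i<N. Z i \<omega>) / real N - \<mu>\<bar> < 1 / real (Suc k)) sequentially"
    show "((\<lambda>N. (\<Sum>i<N. Z i \<omega>) / real N) \<longlongrightarrow> \<mu>) sequentially"
    proof (rule tendstoI)
      fix e :: real assume "e > 0"
      then obtain k where k: "inverse (real (Suc k)) < e" using reals_Archimedean by blast
      show "eventually (\<lambda>N. dist ((\<Sum>i<N. Z i \<omega>) / real N) \<mu> < e) sequentially"
        using H[rule_format, of k] by eventually_elim (metis dist_real_def inverse_eq_divide k less_trans)
    qed
  qed
qed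

lemma measurable_continuous_on_comp:
  fixes F :: "'b::topological_space \<Rightarrow> real"
  assumes "continuous_on S F" "closed S" "\<phi> \<in> N \<rightarrow>\<^sub>M borel" "\<And>x. x \<in> space N \<Longrightarrow> \<phi> x \<in> S"
  shows "(\<lambda>x. F (\<phi> x)) \<in> borel_measurable N"
proof -
  have "(\<lambda>z. if z \<in> S then F z else 0) \<in> borel_measurable borel"
    by (rule borel_measurable_continuous_on_if) (use assms in \<open>auto intro: continuous_on_const\<close>)
  then have "(\<lambda>x. (\<lambda>z. if z \<in> S then F z else 0) (\<phi> x)) \<in> borel_measurable N"
    using assms(3) by (rule measurable_compose[rotated])
  then show ?thesis by (rule measurable_cong[THEN iffD1, rotated]) (use assms(4) in auto)
qed

lemma ln_diff_le:
  fixes u v m :: real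
  assumes "m > 0" "u \<ge> m" "v \<ge> m"
  shows "\<bar>ln u - ln v\<bar> \<le> \<bar>u - v\<bar> / m"
proof -
  have A: "ln x - ln y \<le> \<bar>x - y\<bar> / m" if "x \<ge> m" "y \<ge> m" for x y
  proof -
    have "ln x - ln y = ln (x / y)" using that assms by (simp add: ln_div)
    also have "\<dots> \<le> x / y - 1" using that assms by (intro ln_le_minus_one) simp
    also have "\<dots> = (x - y) / y" using that assms by (simp add: field_simps)
    also have "\<dots> \<le> \<bar>x - y\<bar> / y" using that assms by (intro divide_right_mono) auto
    also have "\<dots> \<le> \<bar>x - y\<bar> / m" using that assms by (intro divide_left_mono) auto
    finally show ?thesis .
  qed
  show ?thesis using A[of u v] A[of v u] assms by (auto simp: abs_minus_commute)
qed

lemma avg_diff_le: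
  fixes u v :: "nat \<Rightarrow> real"
  assumes "\<And>j. j < N \<Longrightarrow> \<bar>u j - v j\<bar> \<le> e" "e \<ge> 0"
  shows "\<bar>(\<Sum>j<N. u j) / real N - (\<Sum>j<N. v j) / real N\<bar> \<le> e"
proof (cases "N = 0")
  case True then show ?thesis using assms by simp
next
  case False
  have "\<bar>(\<Sum>j<N. u j) / real N - (\<Sum>j<N. v j) / real N\<bar> = \<bar>\<Sum>j<N. u j - v j\<bar> / real N"
    by (simp add: sum_subtractf diff_divide_distrib[symmetric])
  also have "\<dots> \<le> (\<Sum>j<N. \<bar>u j - v j\<bar>) / real N"
    by (intro divide_right_mono sum_abs) auto
  also have "(\<Sum>j<N. \<bar>u j - v j\<bar>) \<le> real N * e"
    using sum_bounded_above[of "{..<N}" "\<lambda>j. \<bar>u j - v j\<bar>" e] assms by simp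
  then have "(\<Sum>j<N. \<bar>u j - v j\<bar>) / real N \<le> e"
    using False by (simp add: field_simps)
  finally show ?thesis .
qed

lemma half_limit:
  fixes M :: "'a measure" and Sx :: "'x measure" and St :: "'t measure"
    and X :: "nat \<Rightarrow> 'a \<Rightarrow> 'x" and T :: "nat \<Rightarrow> 'a \<Rightarrow> 't"
    and fx :: "'x \<Rightarrow> 'e::euclidean_space" and ft :: "'t \<Rightarrow> 'e"
    and g :: "'e \<Rightarrow> 'e \<Rightarrow> real"
  assumes M: "prob_space M"
    and Xm: "\<And>i. X i \<in> M \<rightarrow>\<^sub>M Sx" and Tm: "\<And>i. T i \<in> M \<rightarrow>\<^sub>M St"
    and iX: "prob_space.indep_vars M (\<lambda>_. Sx) X UNIV"
    and iT: "prob_space.indep_vars M (\<lambda>_. St) T UNIV"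
    and dX: "\<And>i. distr M Sx (X i) = Px" and dT: "\<And>i. distr M St (T i) = Pt"
    and fx_meas: "fx \<in> borel_measurable Sx"
    and ft_meas: "ft \<in> borel_measurable St"
    and K: "compact K"
    and fx_K: "\<And>x. x \<in> space Sx \<Longrightarrow> fx x \<in> K"
    and ft_K: "\<And>t. t \<in> space St \<Longrightarrow> ft t \<in> K"
    and g_cont: "continuous_on (K \<times> K) (\<lambda>(a, b). g a b)"
    and g_pos: "\<And>a b. a \<in> K \<Longrightarrow> b \<in> K \<Longrightarrow> g a b > 0"
  shows "AE \<omega> in M. ((\<lambda>N. (\<Sum>i<N. ln ((\<Sum>j<N. g (fx (X i \<omega>)) (ft (T j \<omega>))) / real N)) / real N)
          \<longlongrightarrow> (\<integral>x. ln (\<integral>t. g (fx x) (ft t) \<partial>Pt) \<partial>Px)) sequentially"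
proof -
  interpret prob_space M by (rule M)
  have PtP: "prob_space Pt" using dT[of 0] prob_space_distr[OF Tm[of 0]] by simp
  have PxP: "prob_space Px" using dX[of 0] prob_space_distr[OF Xm[of 0]] by simp
  interpret Pt: prob_space Pt by (rule PtP)
  interpret Px: prob_space Px by (rule PxP)
  have spPt: "space Pt = space St" using dT[of 0] by (metis space_distr)
  have spPx: "space Px = space Sx" using dX[of 0] by (metis space_distr)
  have setsPt: "sets Pt = sets St" using dT[of 0] by (metis sets_distr)
  have setsPx: "sets Px = sets Sx" using dX[of 0] by (metis sets_distr)
  have Tsp: "\<omega> \<in> space M \<Longrightarrow> T j \<omega> \<in> space St" for j \<omega> using Tm by (rule measurable_space)
  have Xsp: "\<omega> \<in> space M \<Longrightarrow> X j \<omega> \<in> space Sx" for j \<omega> using Xm by (rule measurable_space)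
  obtain \<omega>0 where \<omega>0: "\<omega>0 \<in> space M" using not_empty by blast
  have KK: "compact (K \<times> K)" using K K by (rule compact_Times)
  have Kne: "K \<times> K \<noteq> {}" using ft_K[OF Tsp[OF \<omega>0, of 0]] by auto
  obtain p0 where p0: "p0 \<in> K \<times> K" "\<And>y. y \<in> K \<times> K \<Longrightarrow> (\<lambda>(a, b). g a b) p0 \<le> (\<lambda>(a, b). g a b) y"
    using continuous_attains_inf[OF KK Kne g_cont] by blast
  obtain p1 where p1: "p1 \<in> K \<times> K" "\<And>y. y \<in> K \<times> K \<Longrightarrow> (\<lambda>(a, b). g a b) y \<le> (\<lambda>(a, b). g a b) p1"
    using continuous_attains_sup[OF KK Kne g_cont] by blast
  define m where "m = (\<lambda>(a, b). g a b) p0"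
  define Bg where "Bg = (\<lambda>(a, b). g a b) p1"
  have mpos: "m > 0" using p0(1) g_pos by (auto simp: m_def)
  have gm: "a \<in> K \<Longrightarrow> b \<in> K \<Longrightarrow> m \<le> g a b" for a b using p0(2)[of "(a, b)"] by (simp add: m_def)
  have gB: "a \<in> K \<Longrightarrow> b \<in> K \<Longrightarrow> g a b \<le> Bg" for a b using p1(2)[of "(a, b)"] by (simp add: Bg_def)
  have mB: "m \<le> Bg" using gm gB p0(1) by (metis SigmaE order_trans)
  have gabs: "a \<in> K \<Longrightarrow> b \<in> K \<Longrightarrow> \<bar>g a b\<bar> \<le> Bg" for a b
    using gB[of a b] g_pos[of a b] by simp
  have uc: "uniformly_continuous_on (K \<times> K) (\<lambda>(a, b). g a b)"
    using compact_uniformly_continuous[OF g_cont KK].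
  have ucg: "\<exists>\<delta>>0. \<forall>a\<in>K. \<forall>a'\<in>K. \<forall>b\<in>K. dist a a' < \<delta> \<longrightarrow> \<bar>g a b - g a' b\<bar> < e" if epos: "e > 0" for e
  proof -
    obtain \<delta> where \<delta>: "\<delta> > 0" "\<And>x x'. x \<in> K \<times> K \<Longrightarrow> x' \<in> K \<times> K \<Longrightarrow> dist x' x < \<delta> \<Longrightarrow>
        dist ((\<lambda>(a, b). g a b) x') ((\<lambda>(a, b). g a b) x) < e"
      using uc epos unfolding uniformly_continuous_on_def by meson
    show ?thesis
    proof (intro exI[of _ \<delta>] conjI ballI impI)
      fix a a' b assume "a \<in> K" "a' \<in> K" "b \<in> K" "dist a a' < \<delta>"
      then show "\<bar>g a b - g a' b\<bar> < e"
        using \<delta>(2)[of "(a', b)" "(a, b)"] by (simp add: dist_Pair_Pair dist_real_def)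
    qed (fact \<delta>)
  qed
  have gmeas: "(\<lambda>t. g a (ft t)) \<in> borel_measurable St" if a: "a \<in> K" for a
  proof -
    have "(\<lambda>t. (a, ft t)) \<in> St \<rightarrow>\<^sub>M borel"
      by (subst borel_prod[symmetric]) (use ft_meas in measurable)
    then have "(\<lambda>t. (\<lambda>(a, b). g a b) (a, ft t)) \<in> borel_measurable St"
      by (rule measurable_continuous_on_comp[OF g_cont compact_imp_closed[OF KK]])
         (use a ft_K in auto)
    then show ?thesis by simp
  qed
  define G where "G a = (\<integral>t. g a (ft t) \<partial>Pt)" for a
  have gint: "a \<in> K \<Longrightarrow> integrable Pt (\<lambda>t. g a (ft t))" for a
    by (rule Pt.integrable_const_bound[where B = Bg])
       (auto simp: spPt measurable_cong_sets[OF setsPt refl] gmeas gabs ft_K intro!: AE_I2)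
  have GmB: "m \<le> G a \<and> G a \<le> Bg" if a: "a \<in> K" for a
    unfolding G_def using a
    by (auto intro!: Pt.integral_ge_const Pt.integral_le_const gint AE_I2 gm gB ft_K simp: spPt)
  have Gdiff: "\<bar>G a - G a'\<bar> \<le> e"
    if a: "a \<in> K" "a' \<in> K" and b: "\<And>b. b \<in> K \<Longrightarrow> \<bar>g a b - g a' b\<bar> \<le> e" for a a' e
  proof -
    have "G a - G a' = (\<integral>t. g a (ft t) - g a' (ft t) \<partial>Pt)"
      unfolding G_def using a by (intro Bochner_Integration.integral_diff[symmetric] gint)
    also have "\<bar>\<dots>\<bar> \<le> (\<integral>t. \<bar>g a (ft t) - g a' (ft t)\<bar> \<partial>Pt)" by (rule integral_abs_bound)
    also have "\<dots> \<le> e"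
      using a by (intro Pt.integral_le_const AE_I2 b)
                 (auto simp: spPt ft_K intro!: integrable_abs Bochner_Integration.integrable_diff gint)
    finally show ?thesis .
  qed
  have Gcont: "continuous_on K G"
    unfolding continuous_on_iff
  proof (intro ballI allI impI)
    fix a :: 'e and e :: real assume a: "a \<in> K" and e: "e > 0"
    obtain \<delta> where \<delta>: "\<delta> > 0" "\<And>a a' b. a \<in> K \<Longrightarrow> a' \<in> K \<Longrightarrow> b \<in> K \<Longrightarrow> dist a a' < \<delta> \<Longrightarrow> \<bar>g a b - g a' b\<bar> < e / 2"
      using ucg[of "e / 2"] e by auto
    show "\<exists>d>0. \<forall>x'\<in>K. dist x' a < d \<longrightarrow> dist (G x') (G a) < e"
    proof (intro exI[of _ \<delta>] conjI ballI impI)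
      fix a' assume a': "a' \<in> K" "dist a' a < \<delta>"
      have "\<bar>G a' - G a\<bar> \<le> e / 2"
        using a a' by (intro Gdiff less_imp_le \<delta>(2)) auto
      then show "dist (G a') (G a) < e" using e by (simp add: dist_real_def)
    qed (fact \<delta>)
  qed
  have lnGc: "continuous_on K (\<lambda>a. ln (G a))"
    using Gcont GmB mpos by (intro continuous_intros) force+
  have lnGmeas: "(\<lambda>x. ln (G (fx x))) \<in> borel_measurable Sx"
    by (rule measurable_continuous_on_comp[OF lnGc compact_imp_closed[OF K] fx_meas fx_K])
  have pt_lln: "AE \<omega> in M. ((\<lambda>N. (\<Sum>j<N. g a (ft (T j \<omega>))) / real N) \<longlongrightarrow> G a) sequentially"
    if a: "a \<in> K" for a
  proof (rule slln_bounded[OF M, where B = Bg])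
    show "indep_vars (\<lambda>_. borel) (\<lambda>j \<omega>. g a (ft (T j \<omega>))) UNIV"
      using iT by (rule indep_vars_compose2) (use gmeas[OF a] in auto)
    show "\<bar>g a (ft (T j \<omega>))\<bar> \<le> Bg" if "\<omega> \<in> space M" for j \<omega>
      using that a by (intro gabs ft_K Tsp)
    show "expectation (\<lambda>\<omega>. g a (ft (T j \<omega>))) = G a" for j
      unfolding G_def dT[of j, symmetric] by (rule integral_distr[symmetric, OF Tm gmeas[OF a]])
  qed
  have lnGabs: "\<bar>ln (G a)\<bar> \<le> \<bar>ln m\<bar> + \<bar>ln Bg\<bar>" if a: "a \<in> K" for a
  proof -
    have "ln m \<le> ln (G a)" "ln (G a) \<le> ln Bg" using GmB[OF a] mpos by auto
    then show ?thesis by linarith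
  qed
  have x_lln: "AE \<omega> in M. ((\<lambda>N. (\<Sum>i<N. ln (G (fx (X i \<omega>)))) / real N)
      \<longlongrightarrow> (\<integral>x. ln (G (fx x)) \<partial>Px)) sequentially"
  proof (rule slln_bounded[OF M, where B = "\<bar>ln m\<bar> + \<bar>ln Bg\<bar>"])
    show "indep_vars (\<lambda>_. borel) (\<lambda>i \<omega>. ln (G (fx (X i \<omega>)))) UNIV"
      using iX by (rule indep_vars_compose2) (use lnGmeas in auto)
    show "\<bar>ln (G (fx (X i \<omega>)))\<bar> \<le> \<bar>ln m\<bar> + \<bar>ln Bg\<bar>" if "\<omega> \<in> space M" for i \<omega>
      using that by (intro lnGabs fx_K Xsp)
    show "expectation (\<lambda>\<omega>. ln (G (fx (X i \<omega>)))) = (\<integral>x. ln (G (fx x)) \<partial>Px)" for i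
      unfolding dX[of i, symmetric] by (rule integral_distr[symmetric, OF Xm lnGmeas])
  qed
  define r where "r k = 1 / real (Suc k)" for k
  have rpos: "r k > 0" for k by (simp add: r_def)
  have "\<exists>C'. C' \<subseteq> K \<and> finite C' \<and> K \<subseteq> (\<Union>c\<in>C'. ball c (r k))" for k
  proof -
    obtain C' where "C' \<subseteq> K" "finite C'" "K \<subseteq> (\<Union>c\<in>C'. ball c (r k))"
      by (rule compactE_image[OF K, of K "\<lambda>c. ball c (r k)"]) (use rpos in auto)
    then show ?thesis by blast
  qed
  then obtain F where F: "\<And>k. F k \<subseteq> K" "\<And>k. finite (F k)" "\<And>k. K \<subseteq> (\<Union>c\<in>F k. ball c (r k))"
    by metis
  define C where "C = (\<Union>k. F k)"
  have Cc: "countable C" unfolding C_def by (intro countable_UN) (auto intro: countable_finite F(2))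
  have CK: "C \<subseteq> K" using F(1) by (auto simp: C_def)
  have c_lln: "AE \<omega> in M. \<forall>c\<in>C. ((\<lambda>N. (\<Sum>j<N. g c (ft (T j \<omega>))) / real N) \<longlongrightarrow> G c) sequentially"
    using CK by (subst AE_ball_countable[OF Cc]) (auto intro!: pt_lln)
  show ?thesis
    using c_lln x_lln
  proof (rule AE_mp[OF _ AE_mp], intro AE_I2 impI)
    fix \<omega> assume \<omega>: "\<omega> \<in> space M"
      and Hc: "\<forall>c\<in>C. ((\<lambda>N. (\<Sum>j<N. g c (ft (T j \<omega>))) / real N) \<longlongrightarrow> G c) sequentially"
      and Hx: "((\<lambda>N. (\<Sum>i<N. ln (G (fx (X i \<omega>)))) / real N) \<longlongrightarrow> (\<integral>x. ln (G (fx x)) \<partial>Px)) sequentially"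
    have bK: "ft (T j \<omega>) \<in> K" for j using \<omega> by (intro ft_K Tsp)
    have aK: "fx (X i \<omega>) \<in> K" for i using \<omega> by (intro fx_K Xsp)
    define h where "h N a = (\<Sum>j<N. g a (ft (T j \<omega>))) / real N" for N a
    have unif: "eventually (\<lambda>N. \<forall>a\<in>K. \<bar>h N a - G a\<bar> \<le> e) sequentially" if e: "e > 0" for e
    proof -
      obtain \<delta> where \<delta>: "\<delta> > 0" "\<And>a a' b. a \<in> K \<Longrightarrow> a' \<in> K \<Longrightarrow> b \<in> K \<Longrightarrow> dist a a' < \<delta> \<Longrightarrow> \<bar>g a b - g a' b\<bar> < e / 3"
        using ucg[of "e / 3"] e by auto
      obtain k where k: "inverse (real (Suc k)) < \<delta>" using reals_Archimedean \<delta>(1) by blast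
      have rk: "r k < \<delta>" using k by (simp add: r_def inverse_eq_divide)
      have "eventually (\<lambda>N. \<forall>c\<in>F k. dist (h N c) (G c) < e / 3) sequentially"
      proof (rule eventually_ball_finite[OF F(2)], intro ballI)
        fix c assume "c \<in> F k"
        then have "c \<in> C" by (auto simp: C_def)
        then show "eventually (\<lambda>N. dist (h N c) (G c) < e / 3) sequentially"
          using tendstoD[of "\<lambda>N. h N c" "G c" sequentially "e / 3"] Hc e unfolding h_def by auto
      qed
      then show ?thesis
      proof eventually_elim
        case (elim N)
        show ?case
        proof
          fix a assume a: "a \<in> K"
          then obtain c where c: "c \<in> F k" "dist c a < r k" using F(3)[of k] by auto
          have cK: "c \<in> K" using c F(1) by auto
          have dca: "dist a c < \<delta>" using c rk by (simp add: dist_commute)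
          have 1: "\<bar>h N a - h N c\<bar> \<le> e / 3"
            unfolding h_def using e by (intro avg_diff_le less_imp_le \<delta>(2) a cK bK dca) auto
          have 2: "\<bar>G a - G c\<bar> \<le> e / 3"
            by (intro Gdiff a cK less_imp_le \<delta>(2) dca)
          have 3: "\<bar>h N c - G c\<bar> < e / 3" using elim c by (auto simp: dist_real_def)
          show "\<bar>h N a - G a\<bar> \<le> e" using 1 2 3 by linarith
        qed
      qed
    qed
    have hm: "m \<le> h N a" if "N > 0" "a \<in> K" for N a
    proof -
      have "real N * m \<le> (\<Sum>j<N. g a (ft (T j \<omega>)))"
        using sum_bounded_below[of "{..<N}" m "\<lambda>j. g a (ft (T j \<omega>))"] that gm bK by simp
      then show ?thesis using that by (simp add: h_def field_simps)
    qed
    define W where "W N = (\<Sum>i<N. ln (G (fx (X i \<omega>)))) / real N" for N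
    define A where "A N = (\<Sum>i<N. ln (h N (fx (X i \<omega>)))) / real N" for N
    have D: "((\<lambda>N. A N - W N) \<longlongrightarrow> 0) sequentially"
    proof (rule tendstoI)
      fix e :: real assume e: "e > 0"
      have "eventually (\<lambda>N. \<forall>a\<in>K. \<bar>h N a - G a\<bar> \<le> e * m / 2) sequentially"
        using e mpos by (intro unif) simp
      then show "eventually (\<lambda>N. dist (A N - W N) 0 < e) sequentially"
        using eventually_gt_at_top[of 0]
      proof eventually_elim
        case (elim N)
        have "\<bar>A N - W N\<bar> \<le> e / 2"
          unfolding A_def W_def
        proof (rule avg_diff_le)
          fix i assume "i < N"
          have "\<bar>ln (h N (fx (X i \<omega>))) - ln (G (fx (X i \<omega>)))\<bar> \<le> \<bar>h N (fx (X i \<omega>)) - G (fx (X i \<omega>))\<bar> / m"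
            using mpos hm[OF elim(2) aK] GmB[OF aK] by (intro ln_diff_le) auto
          also have "\<dots> \<le> (e * m / 2) / m"
            using elim(1) aK mpos by (intro divide_right_mono) auto
          also have "\<dots> = e / 2" using mpos by simp
          finally show "\<bar>ln (h N (fx (X i \<omega>))) - ln (G (fx (X i \<omega>)))\<bar> \<le> e / 2" .
        qed (use e in simp)
        then show ?case using e by (simp add: dist_real_def)
      qed
    qed
    have "((\<lambda>N. (A N - W N) + W N) \<longlongrightarrow> 0 + (\<integral>x. ln (G (fx x)) \<partial>Px)) sequentially"
      using D Hx unfolding W_def by (rule tendsto_add)
    then show "((\<lambda>N. (\<Sum>i<N. ln ((\<Sum>j<N. g (fx (X i \<omega>)) (ft (T j \<omega>))) / real N)) / real N)
          \<longlongrightarrow> (\<integral>x. ln (\<integral>t. g (fx x) (ft t) \<partial>Pt) \<partial>Px)) sequentially"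
      by (simp add: A_def h_def G_def)
  qed
qed
lemma loss_part:
  fixes E :: "nat \<Rightarrow> nat \<Rightarrow> real" and u :: "nat \<Rightarrow> real"
  assumes N: "N > 0" and E: "\<And>i j. E i j > 0"
  shows "- (1 / real N) * (\<Sum>i<N. ln (exp (u i) / (\<Sum>j<N. E i j)))
     = - (\<Sum>i<N. u i) / real N + (\<Sum>i<N. ln ((\<Sum>j<N. E i j) / real N)) / real N + ln (real N)"
proof -
  have S: "(\<Sum>j<N. E i j) > 0" for i using N E by (intro sum_pos) auto
  have t: "ln (exp (u i) / (\<Sum>j<N. E i j)) = u i - ln ((\<Sum>j<N. E i j) / real N) - ln (real N)" for i
    using S[of i] N by (simp add: ln_div)
  have "(\<Sum>i<N. ln (exp (u i) / (\<Sum>j<N. E i j)))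
      = (\<Sum>i<N. u i) - (\<Sum>i<N. ln ((\<Sum>j<N. E i j) / real N)) - real N * ln (real N)"
    by (simp add: t sum_subtractf)
  then show ?thesis using N by (simp add: field_simps)
qed

theorem theorem3p1:
  fixes M :: "'a measure"
    and Sx :: "'x measure" and St :: "'t measure"
    and P :: "('x \<times> 't) measure"
    and X :: "nat \<Rightarrow> 'a \<Rightarrow> 'x" and T :: "nat \<Rightarrow> 'a \<Rightarrow> 't"
    and fx :: "'x \<Rightarrow> real ^ 'D" and ft :: "'t \<Rightarrow> real ^ 'D"
    and K :: "(real ^ 'D) set"
    and d :: "real ^ 'D \<Rightarrow> real ^ 'D \<Rightarrow> real"
    and tau :: real
  assumes M: "prob_space M"
    and meas: "\<And>i. (\<lambda>\<omega>. (X i \<omega>, T i \<omega>)) \<in> M \<rightarrow>\<^sub>M Sx \<Otimes>\<^sub>M St"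
    and indep: "prob_space.indep_vars M (\<lambda>_. Sx \<Otimes>\<^sub>M St) (\<lambda>i \<omega>. (X i \<omega>, T i \<omega>)) UNIV"
    and distr: "\<And>i. distr M (Sx \<Otimes>\<^sub>M St) (\<lambda>\<omega>. (X i \<omega>, T i \<omega>)) = P"
    and fx_meas: "fx \<in> borel_measurable Sx"
    and ft_meas: "ft \<in> borel_measurable St"
    and K: "compact K"
    and fx_K: "\<And>x. x \<in> space Sx \<Longrightarrow> fx x \<in> K"
    and ft_K: "\<And>t. t \<in> space St \<Longrightarrow> ft t \<in> K"
    and d_cont: "continuous_on (K \<times> K) (\<lambda>(a, b). d a b)"
    and tau: "tau > 0"
  shows "AE \<omega> in M.
     ((\<lambda>N. contrastive_loss fx ft d tau (\<lambda>i. X i \<omega>) (\<lambda>i. T i \<omega>) N - 2 * ln (real N))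
       \<longlongrightarrow>
        2 * (\<integral>z. d (fx (fst z)) (ft (snd z)) / tau \<partial>P)
        + (\<integral>x. ln (\<integral>t. exp (- d (fx x) (ft t) / tau) \<partial>(distr P St snd)) \<partial>(distr P Sx fst))
        + (\<integral>t. ln (\<integral>x. exp (- d (fx x) (ft t) / tau) \<partial>(distr P Sx fst)) \<partial>(distr P St snd)))
     sequentially"
proof -
  interpret prob_space M by (rule M)
  define Px where "Px = distr P Sx fst"
  define Pt where "Pt = distr P St snd"
  have Ysp: "\<omega> \<in> space M \<Longrightarrow> X i \<omega> \<in> space Sx \<and> T i \<omega> \<in> space St" for i \<omega>
    using measurable_space[OF meas[of i]] by (auto simp: space_pair_measure)
  have Xm: "X i \<in> M \<rightarrow>\<^sub>M Sx" for i
    using measurable_compose[OF meas[of i] measurable_fst] by (simp add: comp_def)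
  have Tm: "T i \<in> M \<rightarrow>\<^sub>M St" for i
    using measurable_compose[OF meas[of i] measurable_snd] by (simp add: comp_def)
  have iX: "indep_vars (\<lambda>_. Sx) X UNIV"
    using indep_vars_compose2[OF indep, of "\<lambda>_. fst" "\<lambda>_. Sx"] by simp
  have iT: "indep_vars (\<lambda>_. St) T UNIV"
    using indep_vars_compose2[OF indep, of "\<lambda>_. snd" "\<lambda>_. St"] by simp
  have dX: "distr M Sx (X i) = Px" for i
    unfolding Px_def distr[of i, symmetric]
    by (subst distr_distr[OF measurable_fst meas]) (simp add: comp_def)
  have dT: "distr M St (T i) = Pt" for i
    unfolding Pt_def distr[of i, symmetric]
    by (subst distr_distr[OF measurable_snd meas]) (simp add: comp_def)
  have g_cont: "continuous_on (K \<times> K) (\<lambda>(a, b). exp (- d a b / tau))"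
  proof -
    have "continuous_on (K \<times> K) (\<lambda>p. exp (- (\<lambda>(a, b). d a b) p / tau))"
      using tau by (intro continuous_intros d_cont) auto
    then show ?thesis by (simp add: case_prod_beta')
  qed
  have d_cont': "continuous_on (K \<times> K) (\<lambda>(a, b). d b a)"
  proof -
    have "continuous_on (K \<times> K) ((\<lambda>(a, b). d a b) \<circ> prod.swap)"
      by (rule continuous_on_compose[OF continuous_on_swap]) (simp add: product_swap d_cont)
    then show ?thesis by (simp add: comp_def case_prod_beta')
  qed
  have g_cont': "continuous_on (K \<times> K) (\<lambda>(a, b). exp (- d b a / tau))"
  proof -
    have "continuous_on (K \<times> K) (\<lambda>p. exp (- (\<lambda>(a, b). d b a) p / tau))"
      using tau by (intro continuous_intros d_cont') auto
    then show ?thesis by (simp add: case_prod_beta')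
  qed
  have H1: "AE \<omega> in M. ((\<lambda>N. (\<Sum>i<N. ln ((\<Sum>j<N. exp (- d (fx (X i \<omega>)) (ft (T j \<omega>)) / tau)) / real N)) / real N)
          \<longlongrightarrow> (\<integral>x. ln (\<integral>t. exp (- d (fx x) (ft t) / tau) \<partial>Pt) \<partial>Px)) sequentially"
    using half_limit[OF M Xm Tm iX iT dX dT fx_meas ft_meas K fx_K ft_K g_cont] by simp
  have H2: "AE \<omega> in M. ((\<lambda>N. (\<Sum>i<N. ln ((\<Sum>j<N. exp (- d (fx (X j \<omega>)) (ft (T i \<omega>)) / tau)) / real N)) / real N)
          \<longlongrightarrow> (\<integral>t. ln (\<integral>x. exp (- d (fx x) (ft t) / tau) \<partial>Px) \<partial>Pt)) sequentially"
    using half_limit[OF M Tm Xm iT iX dT dX ft_meas fx_meas K ft_K fx_K g_cont'] by simp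
  have KK: "compact (K \<times> K)" using K K by (rule compact_Times)
  have "bounded ((\<lambda>(a, b). d a b) ` (K \<times> K))"
    by (intro compact_imp_bounded compact_continuous_image d_cont KK)
  then obtain Bd where Bd: "\<And>y. y \<in> (\<lambda>(a, b). d a b) ` (K \<times> K) \<Longrightarrow> norm y \<le> Bd"
    unfolding bounded_iff by blast
  have dB: "a \<in> K \<Longrightarrow> b \<in> K \<Longrightarrow> \<bar>d a b\<bar> \<le> Bd" for a b using Bd[of "d a b"] by auto
  define hd where "hd z = d (fx (fst z)) (ft (snd z)) / tau" for z
  have hdm: "hd \<in> borel_measurable (Sx \<Otimes>\<^sub>M St)"
  proof -
    have "(\<lambda>z. (fx (fst z), ft (snd z))) \<in> Sx \<Otimes>\<^sub>M St \<rightarrow>\<^sub>M borel"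
      by (subst borel_prod[symmetric]) (use fx_meas ft_meas in measurable)
    then have "(\<lambda>z. (\<lambda>(a, b). d a b) (fx (fst z), ft (snd z))) \<in> borel_measurable (Sx \<Otimes>\<^sub>M St)"
      by (rule measurable_continuous_on_comp[OF d_cont compact_imp_closed[OF KK]])
         (auto simp: space_pair_measure intro: fx_K ft_K)
    then show ?thesis unfolding hd_def by simp
  qed
  have H0: "AE \<omega> in M. ((\<lambda>N. (\<Sum>i<N. hd (X i \<omega>, T i \<omega>)) / real N) \<longlongrightarrow> (\<integral>z. hd z \<partial>P)) sequentially"
  proof (rule slln_bounded[OF M, where B = "Bd / tau"])
    show "indep_vars (\<lambda>_. borel) (\<lambda>i \<omega>. hd (X i \<omega>, T i \<omega>)) UNIV"
      using indep by (rule indep_vars_compose2) (use hdm in auto)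
    show "\<bar>hd (X i \<omega>, T i \<omega>)\<bar> \<le> Bd / tau" if "\<omega> \<in> space M" for i \<omega>
    proof -
      have "\<bar>d (fx (X i \<omega>)) (ft (T i \<omega>))\<bar> \<le> Bd"
        using Ysp[OF that, of i] by (intro dB fx_K ft_K) auto
      then show ?thesis unfolding hd_def using tau by (simp add: divide_right_mono)
    qed
    show "expectation (\<lambda>\<omega>. hd (X i \<omega>, T i \<omega>)) = (\<integral>z. hd z \<partial>P)" for i
      unfolding distr[of i, symmetric] by (rule integral_distr[symmetric, OF meas hdm])
  qed
  show ?thesis
    using H0 H1 H2
  proof eventually_elim
    case (elim \<omega>)
    define A1 where "A1 N = (\<Sum>i<N. ln ((\<Sum>j<N. exp (- d (fx (X i \<omega>)) (ft (T j \<omega>)) / tau)) / real N)) / real N" for N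
    define A2 where "A2 N = (\<Sum>i<N. ln ((\<Sum>j<N. exp (- d (fx (X j \<omega>)) (ft (T i \<omega>)) / tau)) / real N)) / real N" for N
    define D0 where "D0 N = (\<Sum>i<N. hd (X i \<omega>, T i \<omega>)) / real N" for N
    have eq: "contrastive_loss fx ft d tau (\<lambda>i. X i \<omega>) (\<lambda>i. T i \<omega>) N - 2 * ln (real N)
        = 2 * D0 N + A1 N + A2 N" if N: "N > 0" for N
    proof -
      have p1: "- (1 / real N) * (\<Sum>i<N. ln (exp (- d (fx (X i \<omega>)) (ft (T i \<omega>)) / tau) /
              (\<Sum>j<N. exp (- d (fx (X i \<omega>)) (ft (T j \<omega>)) / tau))))
          = - (\<Sum>i<N. - d (fx (X i \<omega>)) (ft (T i \<omega>)) / tau) / real N + A1 N + ln (real N)"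
        unfolding A1_def by (rule loss_part[OF N]) simp
      have p2: "- (1 / real N) * (\<Sum>i<N. ln (exp (- d (fx (X i \<omega>)) (ft (T i \<omega>)) / tau) /
              (\<Sum>j<N. exp (- d (fx (X j \<omega>)) (ft (T i \<omega>)) / tau))))
          = - (\<Sum>i<N. - d (fx (X i \<omega>)) (ft (T i \<omega>)) / tau) / real N + A2 N + ln (real N)"
        unfolding A2_def by (rule loss_part[OF N]) simp
      have D: "- (\<Sum>i<N. - d (fx (X i \<omega>)) (ft (T i \<omega>)) / tau) / real N = D0 N"
        unfolding D0_def hd_def by (simp add: sum_negf)
      show ?thesis
        unfolding contrastive_loss_def using p1 p2 D by linarith
    qed
    have lim: "((\<lambda>N. 2 * D0 N + A1 N + A2 N) \<longlongrightarrow>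
        2 * (\<integral>z. hd z \<partial>P) + (\<integral>x. ln (\<integral>t. exp (- d (fx x) (ft t) / tau) \<partial>Pt) \<partial>Px)
          + (\<integral>t. ln (\<integral>x. exp (- d (fx x) (ft t) / tau) \<partial>Px) \<partial>Pt)) sequentially"
      unfolding D0_def A1_def A2_def
      by (intro tendsto_add tendsto_mult_left elim)
    have ev: "eventually (\<lambda>N. 2 * D0 N + A1 N + A2 N =
        contrastive_loss fx ft d tau (\<lambda>i. X i \<omega>) (\<lambda>i. T i \<omega>) N - 2 * ln (real N)) sequentially"
      using eventually_gt_at_top[of 0] by eventually_elim (simp add: eq)
    show ?case
      using tendsto_cong[OF ev] lim unfolding hd_def Px_def Pt_def by simp
  qed
qed

end
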